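(* The map $A\mapsto c(A)\bmod 2$ from $\mathrm{SL}(2,\mathbb Z)$ to $\mathbb Z/2$ satisfies $c(-A)=c(A)$, and the induced map on the modular group $\mathrm{SL}(2,\mathbb Z)/\{\pm I\}$ coincides with the unique surjective group homomorphism from the modular group onto $\mathbb Z/2$.
   Context: Admissible hexagons are the sets $\{\pm a,\pm b,\pm(a+b)\}\subset\mathbb Z^2$ with $(a,b)$ a basis of $\mathbb Z^2$ (corresponding to isotopy classes of $\theta$-curves in $T^2$). $\Gamma$ is the graph on admissible hexagons, two adjacent iff they share two opposite pairs of vertices $\pm\sigma,\pm\mu$ (a flip); it is a trivalent tree with graph distance $d$, acted on by $\mathrm{SL}(2,\mathbb Z)$. With $W_0=\{\pm(1,0),\pm(0,1),\pm(1,-1)\}$, $c(A)=d(W_0,AW_0)$. *)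

theory Defs
  imports Main
begin

text \<open>Vectors of Z^2 as pairs of integers; 2x2 integer matrices (a,b,c,d) = [[a,b],[c,d]].\<close>

type_synonym vec = "int \<times> int"
type_synonym mat = "int \<times> int \<times> int \<times> int"

definition vadd :: "vec \<Rightarrow> vec \<Rightarrow> vec" where
  "vadd u v = (fst u + fst v, snd u + snd v)"

definition vneg :: "vec \<Rightarrow> vec" where
  "vneg u = (- fst u, - snd u)"

definition vsmul :: "int \<Rightarrow> vec \<Rightarrow> vec" where
  "vsmul m u = (m * fst u, m * snd u)"

definition is_basis :: "vec \<Rightarrow> vec \<Rightarrow> bool" where
  "is_basis a b \<longleftrightarrow> (\<forall>v. \<exists>!mn::int\<times>int. v = vadd (vsmul (fst mn) a) (vsmul (snd mn) b))"

definition hexagon :: "vec \<Rightarrow> vec \<Rightarrow> vec set" where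
  "hexagon a b = {a, vneg a, b, vneg b, vadd a b, vneg (vadd a b)}"

definition admissible :: "vec set \<Rightarrow> bool" where
  "admissible H \<longleftrightarrow> (\<exists>a b. is_basis a b \<and> H = hexagon a b)"

definition adj :: "vec set \<Rightarrow> vec set \<Rightarrow> bool" where
  "adj H K \<longleftrightarrow> admissible H \<and> admissible K \<and> H \<noteq> K \<and>
     (\<exists>\<sigma> \<mu>. \<mu> \<noteq> \<sigma> \<and> \<mu> \<noteq> vneg \<sigma> \<and> {\<sigma>, vneg \<sigma>, \<mu>, vneg \<mu>} \<subseteq> H \<inter> K)"

text \<open>Graph distance in Gamma (Gamma is connected, being a tree).\<close>
definition gdist :: "vec set \<Rightarrow> vec set \<Rightarrow> nat" where
  "gdist H K = (LEAST n. (adj ^^ n) H K)"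

definition W0 :: "vec set" where
  "W0 = {(1,0), (-1,0), (0,1), (0,-1), (1,-1), (-1,1)}"

definition mapply :: "mat \<Rightarrow> vec \<Rightarrow> vec" where
  "mapply M v = (case M of (a,b,c,d) \<Rightarrow> (a * fst v + b * snd v, c * fst v + d * snd v))"

definition mmul :: "mat \<Rightarrow> mat \<Rightarrow> mat" where
  "mmul M N = (case M of (a,b,c,d) \<Rightarrow> case N of (e,f,g,h) \<Rightarrow>
      (a*e + b*g, a*f + b*h, c*e + d*g, c*f + d*h))"

definition mneg :: "mat \<Rightarrow> mat" where
  "mneg M = (case M of (a,b,c,d) \<Rightarrow> (-a,-b,-c,-d))"

definition mdet :: "mat \<Rightarrow> int" where
  "mdet M = (case M of (a,b,c,d) \<Rightarrow> a*d - b*c)"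

definition SL2Z :: "mat set" where
  "SL2Z = {M. mdet M = 1}"

definition cfun :: "mat \<Rightarrow> nat" where
  "cfun A = gdist W0 (mapply A ` W0)"

text \<open>Z/2 is represented by {0,1} :: int with addition mod 2.
  A map f is a group homomorphism SL(2,Z) -> Z/2.\<close>
definition hom_Z2 :: "(mat \<Rightarrow> int) \<Rightarrow> bool" where
  "hom_Z2 f \<longleftrightarrow> (\<forall>A\<in>SL2Z. f A \<in> {0,1}) \<and>
     (\<forall>A\<in>SL2Z. \<forall>B\<in>SL2Z. f (mmul A B) = (f A + f B) mod 2)"

end

theory Submission
  imports Defs
begin


definition Sm :: mat where "Sm = (0,-1,1,0)"
definition Si :: mat where "Si = (0,1,-1,0)"
definition Tm :: mat where "Tm = (1,1,0,1)"
definition Ti :: mat where "Ti = (1,-1,0,1)"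
definition Lm :: mat where "Lm = (1,0,-1,1)"
definition Im :: mat where "Im = (1,0,0,1)"
definition minv :: "mat \<Rightarrow> mat" where "minv M = (case M of (a,b,c,d) \<Rightarrow> (d,-b,-c,a))"
definition phi :: "mat \<Rightarrow> int" where "phi M = (case M of (a,b,c,d) \<Rightarrow> (a*c+b*c+b*d) mod 2)"

lemma mapply_mmul: "mapply (mmul A B) v = mapply A (mapply B v)"
  by (cases A; cases B; cases v) (simp add: mapply_def mmul_def algebra_simps)

lemma mapply_minv1: "mdet A = 1 \<Longrightarrow> mapply (minv A) (mapply A v) = v"
proof -
  assume h: "mdet A = 1"
  obtain a b c d where A: "A = (a,b,c,d)" by (cases A) auto
  obtain x y where v: "v = (x,y)" by (cases v) auto
  have det: "a*d - b*c = 1" using h A by (simp add: mdet_def)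
  have "d*(a*x+b*y) + (-b)*(c*x+d*y) = (a*d-b*c)*x" by (simp add: algebra_simps)
  moreover have "(-c)*(a*x+b*y) + a*(c*x+d*y) = (a*d-b*c)*y" by (simp add: algebra_simps)
  ultimately show ?thesis using det by (simp add: A v mapply_def minv_def)
qed

lemma mapply_minv2: "mdet A = 1 \<Longrightarrow> mapply A (mapply (minv A) v) = v"
proof -
  assume h: "mdet A = 1"
  obtain a b c d where A: "A = (a,b,c,d)" by (cases A) auto
  obtain x y where v: "v = (x,y)" by (cases v) auto
  have det: "a*d - b*c = 1" using h A by (simp add: mdet_def)
  have "a*(d*x+(-b)*y) + b*((-c)*x+a*y) = (a*d-b*c)*x" by (simp add: algebra_simps)
  moreover have "c*(d*x+(-b)*y) + d*((-c)*x+a*y) = (a*d-b*c)*y" by (simp add: algebra_simps)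
  ultimately show ?thesis using det by (simp add: A v mapply_def minv_def)
qed

lemma mdet_mmul: "mdet (mmul A B) = mdet A * mdet B"
  by (cases A; cases B) (simp add: mdet_def mmul_def algebra_simps)

lemma SL_mmul: "A \<in> SL2Z \<Longrightarrow> B \<in> SL2Z \<Longrightarrow> mmul A B \<in> SL2Z"
  by (simp add: SL2Z_def mdet_mmul)

lemma SL_minv: "A \<in> SL2Z \<Longrightarrow> minv A \<in> SL2Z"
  by (cases A) (simp add: SL2Z_def mdet_def minv_def algebra_simps)

lemma mmul_minv: "mdet A = 1 \<Longrightarrow> mmul A (minv A) = Im"
  by (cases A) (simp add: mdet_def minv_def mmul_def Im_def algebra_simps)

lemma phi_hom: "A \<in> SL2Z \<Longrightarrow> B \<in> SL2Z \<Longrightarrow> phi (mmul A B) = (phi A + phi B) mod 2"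
proof -
  assume "A \<in> SL2Z" "B \<in> SL2Z"
  obtain a b c d where A: "A = (a,b,c,d)" by (cases A) auto
  obtain e f g h where B: "B = (e,f,g,h)" by (cases B) auto
  have dA: "odd (a*d - b*c)" and dB: "odd (e*h-f*g)" using \<open>A \<in> SL2Z\<close> \<open>B \<in> SL2Z\<close> A B by (auto simp: SL2Z_def mdet_def)
  have key: "even ((a*e+b*g)*(c*e+d*g) + (a*f+b*h)*(c*e+d*g) + (a*f+b*h)*(c*f+d*h))
     = even ((a*c+b*c+b*d) + (e*g+f*g+f*h))"
    using dA dB
  apply (simp only: even_add even_diff even_mult_iff)
  apply (cases "even a"; cases "even b"; cases "even c"; cases "even d"; cases "even e"; cases "even f"; cases "even g"; cases "even h")
  apply (simp_all)
  done
  have "((a*e+b*g)*(c*e+d*g) + (a*f+b*h)*(c*e+d*g) + (a*f+b*h)*(c*f+d*h)) mod 2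
     = ((a*c+b*c+b*d) + (e*g+f*g+f*h)) mod 2"
    using key by (metis even_iff_mod_2_eq_zero odd_iff_mod_2_eq_one)
  then show ?thesis by (simp add: A B phi_def mmul_def mod_add_eq)
qed

lemma lin_neg: "mapply A (vneg v) = vneg (mapply A v)"
  by (cases A; cases v) (simp add: mapply_def vneg_def algebra_simps)
lemma lin_add: "mapply A (vadd u v) = vadd (mapply A u) (mapply A v)"
  by (cases A; cases u; cases v) (simp add: mapply_def vadd_def algebra_simps)
lemma lin_smul: "mapply A (vsmul m u) = vsmul m (mapply A u)"
  by (cases A; cases u) (simp add: mapply_def vsmul_def algebra_simps)

lemma image_hex: "mapply A ` hexagon a b = hexagon (mapply A a) (mapply A b)"
  by (simp add: hexagon_def lin_neg lin_add)

lemma inj_SL: "mdet A = 1 \<Longrightarrow> inj (mapply A)"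
  by (metis injI mapply_minv1)

lemma basis_pres:
  assumes d: "mdet A = 1" and b: "is_basis a b"
  shows "is_basis (mapply A a) (mapply A b)"
  unfolding is_basis_def
proof
  fix v
  have e: "\<And>mn. (v = vadd (vsmul (fst mn) (mapply A a)) (vsmul (snd mn) (mapply A b)))
     = (mapply (minv A) v = vadd (vsmul (fst mn) a) (vsmul (snd mn) b))"
    by (metis d lin_add lin_smul mapply_minv1 mapply_minv2)
  show "\<exists>!mn. v = vadd (vsmul (fst mn) (mapply A a)) (vsmul (snd mn) (mapply A b))"
    unfolding e using b unfolding is_basis_def by blast
qed

lemma adm_pres: "mdet A = 1 \<Longrightarrow> admissible H \<Longrightarrow> admissible (mapply A ` H)"
  unfolding admissible_def using basis_pres image_hex by metis

lemma adj_inv: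
  assumes d: "mdet A = 1" and h: "adj H K"
  shows "adj (mapply A ` H) (mapply A ` K)"
proof -
  from h obtain s m where sm: "m \<noteq> s" "m \<noteq> vneg s" "{s, vneg s, m, vneg m} \<subseteq> H \<inter> K"
    and ad: "admissible H" "admissible K" "H \<noteq> K" unfolding adj_def by blast
  have inj: "inj (mapply A)" using inj_SL d .
  have 1: "mapply A ` H \<noteq> mapply A ` K" using ad(3) inj by (simp add: inj_image_eq_iff)
  have 2: "mapply A m \<noteq> mapply A s" "mapply A m \<noteq> vneg (mapply A s)"
    using sm inj by (auto simp: inj_eq lin_neg[symmetric])
  have 3: "{mapply A s, vneg (mapply A s), mapply A m, vneg (mapply A m)} \<subseteq> mapply A ` H \<inter> mapply A ` K"
    using sm(3) by (auto simp: lin_neg[symmetric])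
  show ?thesis unfolding adj_def using adm_pres[OF d ad(1)] adm_pres[OF d ad(2)] 1 2 3 by blast
qed


lemma vv1[simp]: "vneg (vneg x) = x" by (cases x) (simp add: vneg_def)
lemma vv2[simp]: "vadd (vadd a b) (vneg b) = a" by (cases a; cases b) (simp add: vneg_def vadd_def)
lemma vv3[simp]: "vadd (vneg (vadd a b)) b = vneg a" by (cases a; cases b) (simp add: vneg_def vadd_def)
lemma vv4[simp]: "vadd s (vneg (vadd s b)) = vneg b" by (cases s; cases b) (simp add: vneg_def vadd_def)
lemma vv5[simp]: "vadd (vneg a) (vneg b) = vneg (vadd a b)" by (cases a; cases b) (simp add: vneg_def vadd_def)
lemma vv6: "vadd b a = vadd a b" by (cases a; cases b) (simp add: vadd_def)

lemma I1: "hexagon a b = hexagon (vneg a) (vneg b)" by (auto simp: hexagon_def)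
lemma I2: "hexagon a b = hexagon b a" by (auto simp: hexagon_def vv6)
lemma I3: "hexagon a b = hexagon (vadd a b) (vneg b)" by (auto simp: hexagon_def)
lemma I4: "hexagon a b = hexagon (vneg (vadd a b)) b" by (auto simp: hexagon_def)
lemma I5: "hexagon s b = hexagon s (vneg (vadd s b))" by (auto simp: hexagon_def)

lemma hex_first: "s \<in> hexagon a b \<Longrightarrow> \<exists>b'. hexagon a b = hexagon s b'"
  apply (subgoal_tac "s = a \<or> s = vneg a \<or> s = b \<or> s = vneg b \<or> s = vadd a b \<or> s = vneg (vadd a b)")
  prefer 2 apply (simp add: hexagon_def)
  apply (elim disjE)
  subgoal by blast
  subgoal using I1[of a b] by blast
  subgoal using I2[of a b] by blast
  subgoal using trans[OF I2[of a b] I1[of b a]] by blast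
  subgoal using I3[of a b] by blast
  subgoal using I4[of a b] by blast
  done

lemma hex3:
  assumes "{s, vneg s, m, vneg m} \<subseteq> hexagon a b" "m \<noteq> s" "m \<noteq> vneg s"
  shows "hexagon a b = hexagon s m \<or> hexagon a b = hexagon s (vneg m)"
proof -
  have s: "s \<in> hexagon a b" and m: "m \<in> hexagon a b" using assms(1) by auto
  obtain b' where e: "hexagon a b = hexagon s b'" using hex_first[OF s] by blast
  have "m \<in> hexagon s b'" using m e by simp
  then have "m = b' \<or> m = vneg b' \<or> m = vadd s b' \<or> m = vneg (vadd s b')"
    using assms(2,3) unfolding hexagon_def by auto
  then show ?thesis
  proof (elim disjE)
    assume h: "m = b'" show ?thesis unfolding h using e by (rule disjI1)
  next
    assume h: "m = vneg b'" show ?thesis unfolding h vv1 using e by (rule disjI2)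
  next
    assume h: "m = vadd s b'" show ?thesis unfolding h using trans[OF e I5[of s b']] by (rule disjI2)
  next
    assume h: "m = vneg (vadd s b')" show ?thesis unfolding h using trans[OF e I5[of s b']] by (rule disjI1)
  qed
qed


lemma TW0: "mapply Tm ` W0 = {(1,0),(-1,0),(1,1),(-1,-1),(0,-1),(0,1)}"
  by (simp add: W0_def Tm_def mapply_def)
lemma TiW0: "mapply Ti ` W0 = {(1,0),(-1,0),(-1,1),(1,-1),(2,-1),(-2,1)}"
  by (simp add: W0_def Ti_def mapply_def)
lemma LW0: "mapply Lm ` W0 = {(1,-1),(-1,1),(0,1),(0,-1),(1,-2),(-1,2)}"
  by (simp add: W0_def Lm_def mapply_def)

lemma nbr:
  assumes "adj W0 K"
  shows "K = mapply Tm ` W0 \<or> K = mapply Ti ` W0 \<or> K = mapply Lm ` W0"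
proof -
  obtain a b where K: "K = hexagon a b" using assms unfolding adj_def admissible_def by blast
  obtain s m where sm: "m \<noteq> s" "m \<noteq> vneg s" "{s, vneg s, m, vneg m} \<subseteq> W0 \<inter> K"
    and ne: "W0 \<noteq> K" using assms unfolding adj_def by blast
  have h: "K = hexagon s m \<or> K = hexagon s (vneg m)" using hex3[of s m a b] sm K by auto
  have "s \<in> W0" "m \<in> W0" using sm(3) by auto
  then have s: "s \<in> {(1,0), (-1,0), (0,1), (0,-1), (1,-1), (-1,1)}"
    and m: "m \<in> {(1,0), (-1,0), (0,1), (0,-1), (1,-1), (-1,1)}" by (simp_all add: W0_def)
  have ne': "K \<noteq> {(1,0), (-1,0), (0,1), (0,-1), (1,-1), (-1,1)}" using ne by (auto simp: W0_def)
  show ?thesis unfolding TW0 TiW0 LW0 using s m h sm(1,2) ne'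
    apply (simp only: insert_iff empty_iff simp_thms)
    apply (elim disjE)
    apply (simp_all add: hexagon_def vneg_def vadd_def insert_commute)
    done
qed


lemma img_mmul: "mapply (mmul X Y) ` S = mapply X ` mapply Y ` S"
  by (simp add: image_image mapply_mmul)

lemma img_inv1: "mdet B = 1 \<Longrightarrow> mapply (minv B) ` mapply B ` S = S"
  by (simp add: image_image mapply_minv1)
lemma img_inv2: "mdet B = 1 \<Longrightarrow> mapply B ` mapply (minv B) ` S = S"
  by (simp add: image_image mapply_minv2)

lemma mmul_minv': "mdet A = 1 \<Longrightarrow> mmul (minv A) A = Im"
  by (cases A) (simp add: mdet_def minv_def mmul_def Im_def algebra_simps)

lemma phi_01: "phi A \<in> {0,1}"
  by (cases A) (auto simp: phi_def)

lemma phi_Im: "phi Im = 0" by (simp add: phi_def Im_def)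
lemma phi_gens: "phi Tm = 1" "phi Ti = 1" "phi Lm = 1" "phi Sm = 1" "phi Si = 1"
  by (simp_all add: phi_def Tm_def Ti_def Lm_def Sm_def Si_def)

lemma gens_SL: "Tm \<in> SL2Z" "Ti \<in> SL2Z" "Lm \<in> SL2Z" "Sm \<in> SL2Z" "Si \<in> SL2Z" "Im \<in> SL2Z"
  by (simp_all add: SL2Z_def mdet_def Tm_def Ti_def Lm_def Sm_def Si_def Im_def)

lemma mapply_Im: "mapply Im v = v" by (cases v) (simp add: mapply_def Im_def)
lemma img_Im: "mapply Im ` S = S" by (simp add: mapply_Im)

lemma stab:
  assumes C: "C \<in> SL2Z" and e: "mapply C ` W0 = W0"
  shows "phi C = 0"
proof -
  obtain a b c d where Cd: "C = (a,b,c,d)" by (cases C) auto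
  have det: "a*d - b*c = 1" using C Cd by (simp add: SL2Z_def mdet_def)
  have "(1,0) \<in> W0" "(0,1) \<in> W0" "(1,-1) \<in> W0" by (simp_all add: W0_def)
  then have "mapply C (1,0) \<in> W0" "mapply C (0,1) \<in> W0" "mapply C (1,-1) \<in> W0"
    using e by (metis image_eqI)+
  then have 1: "(a,c) \<in> {(1,0), (-1,0), (0,1), (0,-1), (1,-1), (-1,1)}"
    and 2: "(b,d) \<in> {(1,0), (-1,0), (0,1), (0,-1), (1,-1), (-1,1)}"
    and 3: "(a-b,c-d) \<in> {(1,0), (-1,0), (0,1), (0,-1), (1,-1), (-1,1)}"
    by (simp_all add: W0_def mapply_def Cd)
  have "(a*c+b*c+b*d) mod 2 = 0" using 1 2 3 det
    apply (simp only: insert_iff empty_iff simp_thms prod.inject)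
    apply (elim disjE conjE; simp)
    done
  then show ?thesis by (simp add: Cd phi_def)
qed


lemma z2_cancel: "(p::int) \<in> {0,1} \<Longrightarrow> x \<in> {0,1} \<Longrightarrow> y \<in> {0,1} \<Longrightarrow> (p+x) mod 2 = 0 \<Longrightarrow> (p+y) mod 2 = 0 \<Longrightarrow> x = y"
  apply (simp only: insert_iff empty_iff simp_thms)
  apply (elim disjE; simp)
  done

lemma welldef:
  assumes A: "A \<in> SL2Z" and B: "B \<in> SL2Z" and e: "mapply A ` W0 = mapply B ` W0"
  shows "phi A = phi B"
proof -
  have dB: "mdet B = 1" using B by (simp add: SL2Z_def)
  have Bi: "minv B \<in> SL2Z" using SL_minv B .
  have "mapply (mmul (minv B) A) ` W0 = W0"
    unfolding img_mmul e using img_inv1[OF dB] .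
  then have "phi (mmul (minv B) A) = 0" using stab SL_mmul[OF Bi A] by blast
  then have 1: "(phi (minv B) + phi A) mod 2 = 0" using phi_hom[OF Bi A] by simp
  have "(phi (minv B) + phi B) mod 2 = 0" using phi_hom[OF Bi B] mmul_minv'[OF dB] phi_Im by simp
  then show ?thesis by (rule z2_cancel[OF phi_01[of "minv B"] phi_01[of A] phi_01[of B] 1])
qed


lemma step:
  assumes B: "B \<in> SL2Z" and h: "adj (mapply B ` W0) K"
  shows "\<exists>C\<in>SL2Z. K = mapply C ` W0 \<and> phi C = (phi B + 1) mod 2"
proof -
  have dB: "mdet B = 1" using B by (simp add: SL2Z_def)
  have dBi: "mdet (minv B) = 1" using SL_minv[OF B] by (simp add: SL2Z_def)
  have a: "adj W0 (mapply (minv B) ` K)"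
    using adj_inv[OF dBi h] unfolding img_inv1[OF dB] .
  have "mapply (minv B) ` K = mapply Tm ` W0 \<or> mapply (minv B) ` K = mapply Ti ` W0 \<or> mapply (minv B) ` K = mapply Lm ` W0"
    by (rule nbr[OF a])
  then obtain X where X: "X \<in> {Tm,Ti,Lm}" "mapply (minv B) ` K = mapply X ` W0" by blast
  have K: "K = mapply (mmul B X) ` W0"
    using img_inv2[OF dB, of K] X(2) unfolding img_mmul by simp
  have XS: "X \<in> SL2Z" "phi X = 1" using X(1) gens_SL phi_gens by auto
  have p: "phi (mmul B X) = (phi B + 1) mod 2" using phi_hom[OF B XS(1)] XS(2) by simp
  show ?thesis
    by (rule bexI[of _ "mmul B X"]) (rule conjI[OF K p], rule SL_mmul[OF B XS(1)])
qed


lemma parity: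
  "(adj ^^ n) W0 K \<Longrightarrow> \<exists>B\<in>SL2Z. K = mapply B ` W0 \<and> phi B = int n mod 2"
proof (induction n arbitrary: K)
  case 0
  then have "K = mapply Im ` W0" "phi Im = int 0 mod 2" using img_Im phi_Im by auto
  then show ?case using gens_SL(6) by blast
next
  case (Suc n)
  then obtain y where y: "(adj ^^ n) W0 y" "adj y K" by (auto elim: relpowp_Suc_E)
  obtain B where B: "B \<in> SL2Z" "y = mapply B ` W0" "phi B = int n mod 2" using Suc.IH[OF y(1)] by blast
  have y2: "adj (mapply B ` W0) K" using y(2) B(2) by simp
  obtain C where C: "C \<in> SL2Z" "K = mapply C ` W0" "phi C = (phi B + 1) mod 2"
    using step[OF B(1) y2] by blast
  have "phi C = int (Suc n) mod 2" using C(3) B(3) by (simp add: mod_add_right_eq add.commute)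
  then show ?case using C(1,2) by blast
qed

definition mu :: "mat \<Rightarrow> nat" where "mu M = (case M of (a,b,c,d) \<Rightarrow> nat (2*\<bar>c\<bar> + \<bar>d\<bar>))"

lemma gen:
  assumes P1: "P Im"
  and st: "\<And>M X. M \<in> SL2Z \<Longrightarrow> X \<in> {Sm,Si,Tm,Ti} \<Longrightarrow> P M \<Longrightarrow> P (mmul M X)"
  shows "M \<in> SL2Z \<Longrightarrow> P M"
proof -
  have Tp: "P (1, int n, 0, 1) \<and> P (1, - int n, 0, 1)" for n
  proof (induction n)
    case 0 show ?case using P1 by (simp add: Im_def)
  next
    case (Suc n)
    have a: "(1, int n, 0, 1) \<in> SL2Z" "(1, - int n, 0, 1) \<in> SL2Z" by (simp_all add: SL2Z_def mdet_def)
    have "P (mmul (1, int n, 0, 1) Tm)" using st[OF a(1), of Tm] Suc by simp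
    moreover have "mmul (1, int n, 0, 1) Tm = (1, int (Suc n), 0, 1)" by (simp add: mmul_def Tm_def)
    moreover have "P (mmul (1, - int n, 0, 1) Ti)" using st[OF a(2), of Ti] Suc by simp
    moreover have "mmul (1, - int n, 0, 1) Ti = (1, - int (Suc n), 0, 1)" by (simp add: mmul_def Ti_def)
    ultimately show ?case by simp
  qed
  have T1: "P (1, b, 0, 1)" for b
  proof (cases "b \<ge> 0")
    case True then show ?thesis using Tp[of "nat b"] by simp
  next
    case False then show ?thesis using Tp[of "nat (-b)"] by simp
  qed
  have T2: "P (-1, b, 0, -1)" for b
  proof -
    have a: "(1, -b, 0, 1) \<in> SL2Z" by (simp add: SL2Z_def mdet_def)
    have "P (mmul (1,-b,0,1) Sm)" using st[OF a, of Sm] T1 by simp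
    moreover have "mmul (1,-b,0,1) Sm = (-b,-1,1,0)" by (simp add: mmul_def Sm_def)
    moreover have a2: "(-b,-1,1,0) \<in> SL2Z" by (simp add: SL2Z_def mdet_def)
    ultimately have "P (mmul (-b,-1,1,0) Sm)" using st[OF a2, of Sm] by simp
    moreover have "mmul (-b,-1,1,0) Sm = (-1,b,0,-1)" by (simp add: mmul_def Sm_def)
    ultimately show ?thesis by simp
  qed
  show "M \<in> SL2Z \<Longrightarrow> P M"
  proof (induction M rule: measure_induct_rule[where f = mu])
    case (less M)
    obtain a b c d where Md: "M = (a,b,c,d)" by (cases M) auto
    have det: "a*d - b*c = 1" using less.prems Md by (simp add: SL2Z_def mdet_def)
    show ?case
    proof (cases "c = 0")
      case True
      then have "a*d = 1" using det by simp
      then have "(a = 1 \<and> d = 1) \<or> (a = -1 \<and> d = -1)" using zmult_eq_1_iff by blast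
      then show ?thesis using T1 T2 True Md by auto
    next
      case c0: False
      show ?thesis
      proof (cases "\<bar>d\<bar> \<ge> \<bar>c\<bar>")
        case dge: True
        show ?thesis
        proof (cases "c*d > 0")
          case True
          define N where "N = (a, b-a, c, d-c)"
          have NS: "N \<in> SL2Z" using det by (simp add: N_def SL2Z_def mdet_def algebra_simps)
          have "\<bar>d - c\<bar> < \<bar>d\<bar>" using True dge c0
            by (cases "c > 0"; cases "d > 0") (auto simp: zero_less_mult_iff)
          then have "mu N < mu M" by (simp add: mu_def N_def Md)
          then have "P N" using less.IH NS by blast
          then have "P (mmul N Tm)" using st[OF NS, of Tm] by simp
          moreover have "mmul N Tm = M" by (simp add: N_def Md mmul_def Tm_def)
          ultimately show ?thesis by simp
        next
          case False
          then have "c*d < 0" using c0 dge by (auto simp: linorder_not_less le_less)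
          define N where "N = (a, a+b, c, c+d)"
          have NS: "N \<in> SL2Z" using det by (simp add: N_def SL2Z_def mdet_def algebra_simps)
          have "\<bar>c + d\<bar> < \<bar>d\<bar>" using \<open>c*d < 0\<close> dge c0
            by (cases "c > 0"; cases "d > 0") (auto simp: mult_less_0_iff)
          then have "mu N < mu M" by (simp add: mu_def N_def Md)
          then have "P N" using less.IH NS by blast
          then have "P (mmul N Ti)" using st[OF NS, of Ti] by simp
          moreover have "mmul N Ti = M" by (simp add: N_def Md mmul_def Ti_def)
          ultimately show ?thesis by simp
        qed
      next
        case False
        define N where "N = (b, -a, d, -c)"
        have NS: "N \<in> SL2Z" using det by (simp add: N_def SL2Z_def mdet_def algebra_simps)
        have "mu N < mu M" using False by (simp add: mu_def N_def Md)
        then have "P N" using less.IH NS by blast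
        then have "P (mmul N Si)" using st[OF NS, of Si] by simp
        moreover have "mmul N Si = M" by (simp add: N_def Md mmul_def Si_def)
        ultimately show ?thesis by simp
      qed
    qed
  qed
qed



lemma basisW0: "is_basis (1,-1) (0,1)"
  unfolding is_basis_def
proof
  fix v :: vec
  obtain x y where v: "v = (x,y)" by (cases v) auto
  show "\<exists>!mn. v = vadd (vsmul (fst mn) (1, -1)) (vsmul (snd mn) (0, 1))"
  proof (rule ex1I[of _ "(x, x+y)"])
    show "v = vadd (vsmul (fst (x, x+y)) (1, -1)) (vsmul (snd (x, x+y)) (0, 1))"
      by (simp add: v vadd_def vsmul_def)
  next
    fix mn :: "int \<times> int"
    assume "v = vadd (vsmul (fst mn) (1, -1)) (vsmul (snd mn) (0, 1))"
    then show "mn = (x, x+y)" by (cases mn) (simp add: v vadd_def vsmul_def)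
  qed
qed

lemma admW0: "admissible W0"
proof -
  have "W0 = hexagon (1,-1) (0,1)" by (auto simp: W0_def hexagon_def vneg_def vadd_def)
  then show ?thesis unfolding admissible_def using basisW0 by blast
qed

lemma SW0: "mapply Sm ` W0 = {(1,0),(-1,0),(1,1),(-1,-1),(0,-1),(0,1)}"
  by (simp add: W0_def Sm_def mapply_def insert_commute)
lemma SiW0: "mapply Si ` W0 = {(1,0),(-1,0),(1,1),(-1,-1),(0,-1),(0,1)}"
  by (simp add: W0_def Si_def mapply_def insert_commute)

lemma adj_N1:
  assumes a: "admissible K" and e: "K = {(1,0),(-1,0),(1,1),(-1,-1),(0,-1),(0,1)}"
  shows "adj W0 K"
proof -
  have 1: "(0::int,1::int) \<noteq> (1,0)" "(0::int,1::int) \<noteq> vneg (1,0)" by (simp_all add: vneg_def)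
  have 2: "{(1,0), vneg (1,0), (0,1), vneg (0,1)} \<subseteq> W0 \<inter> K"
    unfolding e by (simp add: W0_def vneg_def)
  have "(1,-1) \<in> W0" "(1,-1) \<notin> K" unfolding e by (simp_all add: W0_def)
  then have 3: "W0 \<noteq> K" by blast
  show ?thesis unfolding adj_def using a admW0 1 2 3 by blast
qed

lemma adj_N2:
  assumes a: "admissible K" and e: "K = {(1,0),(-1,0),(-1,1),(1,-1),(2,-1),(-2,1)}"
  shows "adj W0 K"
proof -
  have 1: "(1::int,-1::int) \<noteq> (1,0)" "(1::int,-1::int) \<noteq> vneg (1,0)" by (simp_all add: vneg_def)
  have 2: "{(1,0), vneg (1,0), (1,-1), vneg (1,-1)} \<subseteq> W0 \<inter> K"
    unfolding e by (simp add: W0_def vneg_def)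
  have "(0,1) \<in> W0" "(0,1) \<notin> K" unfolding e by (simp_all add: W0_def)
  then have 3: "W0 \<noteq> K" by blast
  show ?thesis unfolding adj_def using a admW0 1 2 3 by blast
qed

lemma adj_gen: "X \<in> {Sm,Si,Tm,Ti} \<Longrightarrow> adj W0 (mapply X ` W0)"
proof -
  assume X: "X \<in> {Sm,Si,Tm,Ti}"
  have XS: "X \<in> SL2Z" using X gens_SL by auto
  have a: "admissible (mapply X ` W0)" using adm_pres admW0 XS by (simp add: SL2Z_def)
  have "X = Sm \<or> X = Si \<or> X = Tm \<or> X = Ti" using X by simp
  then show ?thesis
  proof (elim disjE)
    assume "X = Sm" then show ?thesis using adj_N1[OF a] SW0 by simp
  next
    assume "X = Si" then show ?thesis using adj_N1[OF a] SiW0 by simp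
  next
    assume "X = Tm" then show ?thesis using adj_N1[OF a] TW0 by simp
  next
    assume "X = Ti" then show ?thesis using adj_N2[OF a] TiW0 by simp
  qed
qed

lemma conn: "A \<in> SL2Z \<Longrightarrow> \<exists>n. (adj ^^ n) W0 (mapply A ` W0)"
proof (rule gen[where P = "\<lambda>A. \<exists>n. (adj ^^ n) W0 (mapply A ` W0)"])
  show "\<exists>n. (adj ^^ n) W0 (mapply Im ` W0)"
    using relpowp_0_I[of adj W0] img_Im by metis
next
  fix M X assume M: "M \<in> SL2Z" and X: "X \<in> {Sm,Si,Tm,Ti}" and "\<exists>n. (adj ^^ n) W0 (mapply M ` W0)"
  then obtain n where n: "(adj ^^ n) W0 (mapply M ` W0)" by blast
  have "adj (mapply M ` W0) (mapply M ` mapply X ` W0)"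
    using adj_inv[OF _ adj_gen[OF X]] M by (simp add: SL2Z_def)
  then have "(adj ^^ Suc n) W0 (mapply (mmul M X) ` W0)"
    unfolding img_mmul by (rule relpowp_Suc_I[OF n])
  then show "\<exists>n. (adj ^^ n) W0 (mapply (mmul M X) ` W0)" by blast
qed

lemma cfun_phi: "A \<in> SL2Z \<Longrightarrow> int (cfun A) mod 2 = phi A"
proof -
  assume A: "A \<in> SL2Z"
  obtain n where "(adj ^^ n) W0 (mapply A ` W0)" using conn[OF A] by blast
  then have "(adj ^^ cfun A) W0 (mapply A ` W0)"
    unfolding cfun_def gdist_def by (rule LeastI)
  then obtain B where B: "B \<in> SL2Z" "mapply A ` W0 = mapply B ` W0" "phi B = int (cfun A) mod 2"
    using parity by blast
  show ?thesis using welldef[OF A B(1,2)] B(3) by simp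
qed

lemma fin_cases: "(x::int) \<in> {0,1} \<Longrightarrow> x = 0 \<or> x = 1" by auto

lemma Z1: "(x::int) \<in> {0,1} \<Longrightarrow> x = (x+x) mod 2 \<Longrightarrow> x = 0"
  apply (simp only: insert_iff empty_iff simp_thms)
  apply (elim disjE; simp)
  done
lemma Z2: "(x::int) \<in> {0,1} \<Longrightarrow> y \<in> {0,1} \<Longrightarrow> 0 = (x+y) mod 2 \<Longrightarrow> x = y"
  apply (simp only: insert_iff empty_iff simp_thms)
  apply (elim disjE; simp)
  done
lemma Z3: "(s::int) \<in> {0,1} \<Longrightarrow> t \<in> {0,1} \<Longrightarrow> u = (s+t) mod 2 \<Longrightarrow> ((u+u) mod 2 + u) mod 2 = (s+s) mod 2 \<Longrightarrow> s = t"
  apply (simp only: insert_iff empty_iff simp_thms)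
  apply (elim disjE; simp)
  done
lemma Z4: "(t::int) \<in> {0,1} \<Longrightarrow> t \<noteq> 1 \<Longrightarrow> t = 0" by auto

lemma hom_unique:
  assumes h: "hom_Z2 f" and s: "1 \<in> f ` SL2Z"
  shows "\<forall>A\<in>SL2Z. f A = phi A"
proof -
  have v: "\<And>A. A \<in> SL2Z \<Longrightarrow> f A \<in> {0,1}" and m: "\<And>A B. A \<in> SL2Z \<Longrightarrow> B \<in> SL2Z \<Longrightarrow> f (mmul A B) = (f A + f B) mod 2"
    using h unfolding hom_Z2_def by auto
  have SI: "mmul Sm Si = Im" "mmul Tm Ti = Im" "mmul Im Im = Im"
    by (simp_all add: mmul_def Sm_def Si_def Tm_def Ti_def Im_def)
  have fI: "f Im = 0"
    by (rule Z1[OF v[OF gens_SL(6)] m[OF gens_SL(6) gens_SL(6), unfolded SI(3)]])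
  have fSi: "f Sm = f Si"
    by (rule Z2[OF v[OF gens_SL(4)] v[OF gens_SL(5)] m[OF gens_SL(4) gens_SL(5), unfolded SI(1) fI]])
  have fTi: "f Tm = f Ti"
    by (rule Z2[OF v[OF gens_SL(1)] v[OF gens_SL(2)] m[OF gens_SL(1) gens_SL(2), unfolded SI(2) fI]])
  define U where "U = mmul Sm Tm"
  have US: "U \<in> SL2Z" "mmul U U \<in> SL2Z" unfolding U_def using gens_SL SL_mmul by auto
  have U3: "mmul (mmul U U) U = mmul Sm Sm" by (simp add: U_def mmul_def Sm_def Tm_def)
  have fU: "f U = (f Sm + f Tm) mod 2" unfolding U_def by (rule m[OF gens_SL(4) gens_SL(1)])
  have a1: "f (mmul U U) = (f U + f U) mod 2" by (rule m[OF US(1) US(1)])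
  have a2: "f (mmul Sm Sm) = ((f U + f U) mod 2 + f U) mod 2"
    using m[OF US(2) US(1)] unfolding U3 a1 .
  have a3: "f (mmul Sm Sm) = (f Sm + f Sm) mod 2" by (rule m[OF gens_SL(4) gens_SL(4)])
  have fST: "f Sm = f Tm"
    by (rule Z3[OF v[OF gens_SL(4)] v[OF gens_SL(1)] fU trans[OF a2[symmetric] a3]])
  have fT: "f Tm = 1"
  proof (rule ccontr)
    assume "f Tm \<noteq> 1"
    then have f0: "f Tm = 0" using Z4[OF v[OF gens_SL(1)]] by blast
    have "\<forall>A\<in>SL2Z. f A = 0"
    proof
      fix A assume "A \<in> SL2Z"
      then show "f A = 0"
      proof (rule gen[where P = "\<lambda>A. f A = 0", rotated 2])
        show "f Im = 0" by (rule fI)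
      next
        fix M X assume M: "M \<in> SL2Z" and X: "X \<in> {Sm,Si,Tm,Ti}" and fM: "f M = 0"
        have XS: "X \<in> SL2Z" using X gens_SL by auto
        have fX: "f X = 0" using X f0 fST fSi fTi by auto
        show "f (mmul M X) = 0" using m[OF M XS] fM fX by simp
      qed
    qed
    then show False using s by auto
  qed
  show ?thesis
  proof
    fix A assume "A \<in> SL2Z"
    then show "f A = phi A"
    proof (rule gen[where P = "\<lambda>A. f A = phi A", rotated 2])
      show "f Im = phi Im" using fI phi_Im by simp
    next
      fix M X assume M: "M \<in> SL2Z" and X: "X \<in> {Sm,Si,Tm,Ti}" and e: "f M = phi M"
      have XS: "X \<in> SL2Z" using X gens_SL by auto
      have fX: "f X = phi X" using X fT fST fSi fTi phi_gens by auto
      show "f (mmul M X) = phi (mmul M X)" using m[OF M XS] phi_hom[OF M XS] e fX by simp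
    qed
  qed
qed

lemma mneg_img: "mapply (mneg A) ` W0 = mapply A ` W0"
proof -
  have 1: "mapply (mneg A) v = mapply A (vneg v)" for v
    by (cases A; cases v) (simp add: mapply_def mneg_def vneg_def)
  have 2: "vneg ` W0 = W0" by (auto simp: W0_def vneg_def)
  have "mapply (mneg A) ` W0 = mapply A ` vneg ` W0" by (simp add: image_image 1)
  then show ?thesis using 2 by simp
qed

theorem theorem6:
  shows "(\<forall>A\<in>SL2Z. cfun (mneg A) = cfun A)
   \<and> hom_Z2 (\<lambda>A. int (cfun A) mod 2)
   \<and> (\<lambda>A. int (cfun A) mod 2) ` SL2Z = {0,1}
   \<and> (\<forall>f. hom_Z2 f \<and> (\<forall>A\<in>SL2Z. f (mneg A) = f A) \<and> f ` SL2Z = {0,1}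
          \<longrightarrow> (\<forall>A\<in>SL2Z. f A = int (cfun A) mod 2))"
proof (intro conjI)
  show "\<forall>A\<in>SL2Z. cfun (mneg A) = cfun A" by (simp add: cfun_def mneg_img)
next
  show "hom_Z2 (\<lambda>A. int (cfun A) mod 2)"
    unfolding hom_Z2_def
  proof (intro conjI ballI)
    fix A assume "A \<in> SL2Z" then show "int (cfun A) mod 2 \<in> {0,1}" by auto
  next
    fix A B assume A: "A \<in> SL2Z" and B: "B \<in> SL2Z"
    show "int (cfun (mmul A B)) mod 2 = (int (cfun A) mod 2 + int (cfun B) mod 2) mod 2"
      using cfun_phi[OF SL_mmul[OF A B]] cfun_phi[OF A] cfun_phi[OF B] phi_hom[OF A B] by simp
  qed
next
  show "(\<lambda>A. int (cfun A) mod 2) ` SL2Z = {0,1}"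
  proof
    show "(\<lambda>A. int (cfun A) mod 2) ` SL2Z \<subseteq> {0,1}" by auto
  next
    have "int (cfun Im) mod 2 = 0" using cfun_phi[OF gens_SL(6)] phi_Im by simp
    moreover have "int (cfun Tm) mod 2 = 1" using cfun_phi[OF gens_SL(1)] phi_gens(1) by simp
    ultimately show "{0,1} \<subseteq> (\<lambda>A. int (cfun A) mod 2) ` SL2Z" using gens_SL(6) gens_SL(1)
      by (metis empty_subsetI image_eqI insert_subset)
  qed
next
  show "\<forall>f. hom_Z2 f \<and> (\<forall>A\<in>SL2Z. f (mneg A) = f A) \<and> f ` SL2Z = {0,1}
          \<longrightarrow> (\<forall>A\<in>SL2Z. f A = int (cfun A) mod 2)"
  proof (intro allI impI ballI)
    fix f A assume H: "hom_Z2 f \<and> (\<forall>A\<in>SL2Z. f (mneg A) = f A) \<and> f ` SL2Z = {0,1}" and A: "A \<in> SL2Z"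
    have "1 \<in> f ` SL2Z" using H by simp
    then have "\<forall>A\<in>SL2Z. f A = phi A" using hom_unique H by blast
    then show "f A = int (cfun A) mod 2" using A cfun_phi by simp
  qed
qed


end
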